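(* Let $H$ and $G$ be as in the construction described in the context. If $H$ is a solvable group of length $l$, then $G$ is a solvable group of length $l+2$.
   Context: Construction: $H$ is a group generated by a countable set $\{a^{(1)},a^{(2)},\ldots\}$. For groups $A,B$, the wreath product $A\,\mathrm{Wr}\,B$ is the semidirect product $A^B\rtimes B$, where $A^B$ is the group of all functions $B\to A$ with pointwise multiplication and $B$ acts by $(bf)(x)=f(xb)$. Let $Z=\langle z\rangle$ be infinite cyclic and let $b^{(i)}\in H^Z$ be given by $b^{(i)}(z^k)=a^{(i)}$ if $k>0$ and $b^{(i)}(z^k)=1$ otherwise. Let $K=\langle z,b^{(i)}\ (i\in\mathbb{N})\rangle\le H\,\mathrm{Wr}\,Z$. Let $\langle s\rangle$ be infinite cyclic and let $c\in K^{\langle s\rangle}$ be given by $c(s)=z$, $c(s^{2^i})=b^{(i)}$ for $i>0$, and $c(s^k)=1$ otherwise. Let $G=\langle c,s\rangle\le K\,\mathrm{Wr}\,\langle s\rangle$. *)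

theory Defs
  imports "HOL-Algebra.Algebra"
begin

text \<open>Unrestricted wreath product A Wr B = A^B \<rtimes> B, with B acting on A^B by
  (b f)(x) = f(x b).\<close>
definition wreath :: "('a,'m) monoid_scheme \<Rightarrow> ('b,'n) monoid_scheme \<Rightarrow> (('b \<Rightarrow> 'a) \<times> 'b) monoid"
  where "wreath A B =
    \<lparr> carrier = (carrier B \<rightarrow>\<^sub>E carrier A) \<times> carrier B,
      monoid.mult = (\<lambda>(f1, b1) (f2, b2).
                (\<lambda>x\<in>carrier B. f1 x \<otimes>\<^bsub>A\<^esub> f2 (x \<otimes>\<^bsub>B\<^esub> b1), b1 \<otimes>\<^bsub>B\<^esub> b2)),
      one = (\<lambda>x\<in>carrier B. \<one>\<^bsub>A\<^esub>, \<one>\<^bsub>B\<^esub>) \<rparr>"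

definition solvable_length :: "('a,'b) monoid_scheme \<Rightarrow> nat \<Rightarrow> bool"
  where "solvable_length G n \<longleftrightarrow>
     (derived G ^^ n) (carrier G) = {\<one>\<^bsub>G\<^esub>} \<and>
     (\<forall>m<n. (derived G ^^ m) (carrier G) \<noteq> {\<one>\<^bsub>G\<^esub>})"

text \<open>Infinite cyclic groups Z = <z> and <s> are modelled by integer_group
  (z^k corresponds to k).  H Wr Z:\<close>
abbreviation HWrZ :: "('h,'m) monoid_scheme \<Rightarrow> ((int \<Rightarrow> 'h) \<times> int) monoid"
  where "HWrZ H \<equiv> wreath H integer_group"

definition zelt :: "('h,'m) monoid_scheme \<Rightarrow> (int \<Rightarrow> 'h) \<times> int"
  where "zelt H = (\<lambda>k\<in>UNIV. \<one>\<^bsub>H\<^esub>, 1)"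

definition belt :: "('h,'m) monoid_scheme \<Rightarrow> (nat \<Rightarrow> 'h) \<Rightarrow> nat \<Rightarrow> (int \<Rightarrow> 'h) \<times> int"
  where "belt H a i = (\<lambda>k\<in>UNIV. if k > 0 then a i else \<one>\<^bsub>H\<^esub>, 0)"

definition Kgrp :: "('h,'m) monoid_scheme \<Rightarrow> (nat \<Rightarrow> 'h) \<Rightarrow> ((int \<Rightarrow> 'h) \<times> int) monoid"
  where "Kgrp H a = subgroup_generated (HWrZ H) ({zelt H} \<union> belt H a ` {1..})"

definition cfun :: "('h,'m) monoid_scheme \<Rightarrow> (nat \<Rightarrow> 'h) \<Rightarrow> int \<Rightarrow> (int \<Rightarrow> 'h) \<times> int"
  where "cfun H a = (\<lambda>k\<in>UNIV.
     if k = 1 then zelt H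
     else if (\<exists>i::nat. i > 0 \<and> k = 2 ^ i) then belt H a (THE i. i > 0 \<and> k = 2 ^ i)
     else \<one>\<^bsub>HWrZ H\<^esub>)"

abbreviation KWrS :: "('h,'m) monoid_scheme \<Rightarrow> (nat \<Rightarrow> 'h)
    \<Rightarrow> ((int \<Rightarrow> (int \<Rightarrow> 'h) \<times> int) \<times> int) monoid"
  where "KWrS H a \<equiv> wreath (Kgrp H a) integer_group"

definition celt :: "('h,'m) monoid_scheme \<Rightarrow> (nat \<Rightarrow> 'h) \<Rightarrow> (int \<Rightarrow> (int \<Rightarrow> 'h) \<times> int) \<times> int"
  where "celt H a = (cfun H a, 0)"

definition selt :: "('h,'m) monoid_scheme \<Rightarrow> (nat \<Rightarrow> 'h) \<Rightarrow> (int \<Rightarrow> (int \<Rightarrow> 'h) \<times> int) \<times> int"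
  where "selt H a = (\<lambda>k\<in>UNIV. \<one>\<^bsub>Kgrp H a\<^esub>, 1)"

definition Ggrp :: "('h,'m) monoid_scheme \<Rightarrow> (nat \<Rightarrow> 'h)
    \<Rightarrow> ((int \<Rightarrow> (int \<Rightarrow> 'h) \<times> int) \<times> int) monoid"
  where "Ggrp H a = subgroup_generated (KWrS H a) {celt H a, selt H a}"

end

theory Submission
  imports Defs
begin


abbreviation WZ :: "('a,'m) monoid_scheme \<Rightarrow> ((int \<Rightarrow> 'a) \<times> int) monoid"
  where "WZ A \<equiv> wreath A integer_group"

lemma WZ_carrier: "carrier (WZ A) = {p. \<forall>x. fst p x \<in> carrier A}"
  by (auto simp: wreath_def PiE_def Pi_def extensional_def)

lemma WZ_mem: "p \<in> carrier (WZ A) \<longleftrightarrow> (\<forall>x. fst p x \<in> carrier A)"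
  by (simp add: WZ_carrier)

lemma WZ_mult: "(f1, b1) \<otimes>\<^bsub>WZ A\<^esub> (f2, b2) = (\<lambda>x. f1 x \<otimes>\<^bsub>A\<^esub> f2 (x + b1), b1 + b2)"
  by (simp add: wreath_def restrict_def)

lemma WZ_mult': "p \<otimes>\<^bsub>WZ A\<^esub> q = (\<lambda>x. fst p x \<otimes>\<^bsub>A\<^esub> fst q (x + snd p), snd p + snd q)"
  by (cases p, cases q) (simp add: WZ_mult)

lemma WZ_one: "\<one>\<^bsub>WZ A\<^esub> = (\<lambda>x. \<one>\<^bsub>A\<^esub>, 0)"
  by (simp add: wreath_def restrict_def)

lemma WZ_group: assumes "group A" shows "group (WZ A)"
proof -
  interpret A: group A by fact
  show ?thesis
  proof (rule groupI)
    fix x y assume "x \<in> carrier (WZ A)" "y \<in> carrier (WZ A)"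
    thus "x \<otimes>\<^bsub>WZ A\<^esub> y \<in> carrier (WZ A)" by (simp add: WZ_mem WZ_mult')
  next
    show "\<one>\<^bsub>WZ A\<^esub> \<in> carrier (WZ A)" by (simp add: WZ_mem WZ_one)
  next
    fix x y z assume "x \<in> carrier (WZ A)" "y \<in> carrier (WZ A)" "z \<in> carrier (WZ A)"
    thus "x \<otimes>\<^bsub>WZ A\<^esub> y \<otimes>\<^bsub>WZ A\<^esub> z = x \<otimes>\<^bsub>WZ A\<^esub> (y \<otimes>\<^bsub>WZ A\<^esub> z)"
      by (simp add: WZ_mem WZ_mult' A.m_assoc add.assoc)
  next
    fix x assume "x \<in> carrier (WZ A)"
    thus "\<one>\<^bsub>WZ A\<^esub> \<otimes>\<^bsub>WZ A\<^esub> x = x" by (simp add: WZ_mem WZ_mult' WZ_one)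
  next
    fix x assume x: "x \<in> carrier (WZ A)"
    show "\<exists>y\<in>carrier (WZ A). y \<otimes>\<^bsub>WZ A\<^esub> x = \<one>\<^bsub>WZ A\<^esub>"
      by (rule bexI[of _ "(\<lambda>t. inv\<^bsub>A\<^esub> (fst x (t - snd x)), - snd x)"])
        (use x in \<open>auto simp: WZ_mem WZ_mult' WZ_one\<close>)
  qed
qed

lemma WZ_inv: assumes "group A" "p \<in> carrier (WZ A)"
  shows "inv\<^bsub>WZ A\<^esub> p = (\<lambda>t. inv\<^bsub>A\<^esub> (fst p (t - snd p)), - snd p)"
proof -
  interpret A: group A by fact
  interpret W: group "WZ A" using WZ_group[OF assms(1)] .
  show ?thesis
    by (rule W.inv_equality) (use assms(2) in \<open>auto simp: WZ_mem WZ_mult' WZ_one\<close>)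
qed




definition Base :: "('a,'m) monoid_scheme \<Rightarrow> 'a set \<Rightarrow> ((int \<Rightarrow> 'a) \<times> int) set"
  where "Base A Y = {p. snd p = 0 \<and> (\<forall>x. fst p x \<in> Y)}"

lemma subgroup_Base: assumes "group A" "subgroup Y A" shows "subgroup (Base A Y) (WZ A)"
proof -
  interpret A: group A by fact
  interpret W: group "WZ A" using WZ_group[OF assms(1)] .
  have Yc: "\<And>y. y \<in> Y \<Longrightarrow> y \<in> carrier A" using subgroup.subset[OF assms(2)] by auto
  show ?thesis
  proof (rule W.subgroupI)
    show "Base A Y \<subseteq> carrier (WZ A)" using Yc by (auto simp: Base_def WZ_mem)
    show "Base A Y \<noteq> {}" using subgroup.one_closed[OF assms(2)]
      by (auto simp: Base_def intro!: exI[of _ "(\<lambda>x. \<one>\<^bsub>A\<^esub>, 0)"])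
  next
    fix p assume p: "p \<in> Base A Y"
    hence "p \<in> carrier (WZ A)" using Yc by (auto simp: Base_def WZ_mem)
    thus "inv\<^bsub>WZ A\<^esub> p \<in> Base A Y" using p subgroup.m_inv_closed[OF assms(2)]
      by (auto simp: WZ_inv[OF assms(1)] Base_def)
  next
    fix p q assume "p \<in> Base A Y" "q \<in> Base A Y"
    thus "p \<otimes>\<^bsub>WZ A\<^esub> q \<in> Base A Y" using subgroup.m_closed[OF assms(2)]
      by (auto simp: WZ_mult' Base_def)
  qed
qed

lemma derived_WZ_one: assumes "group A" "XX \<subseteq> carrier (WZ A)"
  shows "derived (WZ A) XX \<subseteq> Base A (carrier A)"
proof -
  interpret A: group A by fact
  interpret W: group "WZ A" using WZ_group[OF assms(1)] .
  have sb: "subgroup (Base A (carrier A)) (WZ A)" by (rule subgroup_Base[OF assms(1) A.subgroup_self])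
  show ?thesis unfolding derived_def
  proof (rule W.generate_subgroup_incl[OF _ sb])
    show "derived_set (WZ A) XX \<subseteq> Base A (carrier A)"
    proof -
      have "h1 \<otimes>\<^bsub>WZ A\<^esub> h2 \<otimes>\<^bsub>WZ A\<^esub> inv\<^bsub>WZ A\<^esub> h1 \<otimes>\<^bsub>WZ A\<^esub> inv\<^bsub>WZ A\<^esub> h2 \<in> Base A (carrier A)"
        if h: "h1 \<in> XX" "h2 \<in> XX" for h1 h2
      proof -
      from h have c: "h1 \<in> carrier (WZ A)" "h2 \<in> carrier (WZ A)" using assms(2) by auto
      hence "h1 \<otimes>\<^bsub>WZ A\<^esub> h2 \<otimes>\<^bsub>WZ A\<^esub> inv\<^bsub>WZ A\<^esub> h1 \<otimes>\<^bsub>WZ A\<^esub> inv\<^bsub>WZ A\<^esub> h2 \<in> carrier (WZ A)"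
        by simp
      moreover have "snd (h1 \<otimes>\<^bsub>WZ A\<^esub> h2 \<otimes>\<^bsub>WZ A\<^esub> inv\<^bsub>WZ A\<^esub> h1 \<otimes>\<^bsub>WZ A\<^esub> inv\<^bsub>WZ A\<^esub> h2) = 0"
        using c by (simp add: WZ_mult' WZ_inv[OF assms(1)])
      ultimately show ?thesis
        by (simp add: Base_def WZ_mem)
      qed
      thus ?thesis by blast
    qed
  qed
qed

lemma derived_WZ_two: assumes "group A" "subgroup Y A" "XX \<subseteq> Base A Y"
  shows "derived (WZ A) XX \<subseteq> Base A (derived A Y)"
proof -
  interpret A: group A by fact
  interpret W: group "WZ A" using WZ_group[OF assms(1)] .
  have Yc: "Y \<subseteq> carrier A" using subgroup.subset[OF assms(2)] .
  have sb: "subgroup (Base A (derived A Y)) (WZ A)"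
    by (rule subgroup_Base[OF assms(1) A.derived_is_subgroup[OF Yc]])
  show ?thesis unfolding derived_def[of "WZ A"]
  proof (rule W.generate_subgroup_incl[OF _ sb])
    show "derived_set (WZ A) XX \<subseteq> Base A (derived A Y)"
    proof -
      have "h1 \<otimes>\<^bsub>WZ A\<^esub> h2 \<otimes>\<^bsub>WZ A\<^esub> inv\<^bsub>WZ A\<^esub> h1 \<otimes>\<^bsub>WZ A\<^esub> inv\<^bsub>WZ A\<^esub> h2 \<in> Base A (derived A Y)"
        if h: "h1 \<in> XX" "h2 \<in> XX" for h1 h2
      proof -
      from h have b: "h1 \<in> Base A Y" "h2 \<in> Base A Y" using assms(3) by auto
      from b have c: "h1 \<in> carrier (WZ A)" "h2 \<in> carrier (WZ A)" using Yc by (auto simp: Base_def WZ_mem)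
      have e: "h1 \<otimes>\<^bsub>WZ A\<^esub> h2 \<otimes>\<^bsub>WZ A\<^esub> inv\<^bsub>WZ A\<^esub> h1 \<otimes>\<^bsub>WZ A\<^esub> inv\<^bsub>WZ A\<^esub> h2
        = (\<lambda>t. fst h1 t \<otimes>\<^bsub>A\<^esub> fst h2 t \<otimes>\<^bsub>A\<^esub> inv\<^bsub>A\<^esub> fst h1 t \<otimes>\<^bsub>A\<^esub> inv\<^bsub>A\<^esub> fst h2 t, 0)"
        using b c by (simp add: WZ_mult' WZ_inv[OF assms(1)] Base_def)
      have "\<And>t. fst h1 t \<otimes>\<^bsub>A\<^esub> fst h2 t \<otimes>\<^bsub>A\<^esub> inv\<^bsub>A\<^esub> fst h1 t \<otimes>\<^bsub>A\<^esub> inv\<^bsub>A\<^esub> fst h2 t \<in> derived A Y"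
        unfolding derived_def using b by (auto simp: Base_def intro!: generate.incl)
      thus ?thesis
        by (simp add: e Base_def)
      qed
      thus ?thesis by blast
    qed
  qed
qed

lemma derived_WZ_pow: assumes "group A" "XX \<subseteq> carrier (WZ A)"
  shows "(derived (WZ A) ^^ Suc n) XX \<subseteq> Base A ((derived A ^^ n) (carrier A))"
proof (induction n)
  case 0 thus ?case using derived_WZ_one[OF assms] by simp
next
  case (Suc n)
  interpret A: group A by fact
  interpret W: group "WZ A" using WZ_group[OF assms(1)] .
  have "(derived (WZ A) ^^ Suc (Suc n)) XX = derived (WZ A) ((derived (WZ A) ^^ Suc n) XX)" by simp
  also have "\<dots> \<subseteq> derived (WZ A) (Base A ((derived A ^^ n) (carrier A)))"
    by (rule W.mono_derived[OF Suc.IH])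
  also have "\<dots> \<subseteq> Base A (derived A ((derived A ^^ n) (carrier A)))"
    by (rule derived_WZ_two[OF assms(1) A.exp_of_derived_is_subgroup[OF A.subgroup_self]]) simp
  finally show ?case by simp
qed

lemma derived_pow_consistent: assumes "group G" "subgroup S G"
  shows "(derived (G\<lparr>carrier := S\<rparr>) ^^ n) S = (derived G ^^ n) S"
proof (induction n)
  case 0 show ?case by simp
next
  case (Suc n)
  interpret G: group G by fact
  have "(derived G ^^ n) S \<subseteq> S"
    using G.mono_derived G.derived_incl[OF _ assms(2)] by (induct n) auto
  thus ?case using Suc G.derived_consistent[OF _ assms(2)] by simp
qed

lemma derived_pow_anti: assumes "group G" "subgroup S G"
  shows "(derived G ^^ (m + j)) S \<subseteq> (derived G ^^ m) S"
proof (induction j)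
  case 0 show ?case by simp
next
  case (Suc j)
  interpret G: group G by fact
  have "(derived G ^^ (m + Suc j)) S = derived G ((derived G ^^ (m + j)) S)" by simp
  also have "\<dots> \<subseteq> (derived G ^^ (m + j)) S"
    by (rule G.derived_incl[OF _ G.exp_of_derived_is_subgroup[OF assms(2)]]) simp
  finally show ?case using Suc by simp
qed




lemma subgroup_generated_eq: "subgroup_generated G S = G\<lparr>carrier := carrier (subgroup_generated G S)\<rparr>"
  by (simp add: subgroup_generated_def)

locale cstr =
  fixes H :: "('h, 'm) monoid_scheme" and a :: "nat \<Rightarrow> 'h"
  assumes grpH: "group H" and a_in: "\<And>i. i \<ge> 1 \<Longrightarrow> a i \<in> carrier H"
begin

sublocale H: group H by (rule grpH)

lemma HW_group: "group (HWrZ H)" by (rule WZ_group[OF grpH])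
sublocale HW: group "HWrZ H" by (rule HW_group)

lemma zelt_eq: "zelt H = (\<lambda>k. \<one>\<^bsub>H\<^esub>, 1)" by (simp add: zelt_def restrict_UNIV)
lemma belt_eq: "belt H a i = (\<lambda>k. if k > 0 then a i else \<one>\<^bsub>H\<^esub>, 0)"
  by (simp add: belt_def restrict_UNIV)

lemma zelt_in: "zelt H \<in> carrier (HWrZ H)" by (simp add: zelt_eq WZ_mem)
lemma belt_in: "i \<ge> 1 \<Longrightarrow> belt H a i \<in> carrier (HWrZ H)" by (simp add: belt_eq WZ_mem a_in)

abbreviation "Kgen \<equiv> {zelt H} \<union> belt H a ` {1..}"
lemma Kgen_sub: "Kgen \<subseteq> carrier (HWrZ H)" using zelt_in belt_in by auto

abbreviation "KC \<equiv> carrier (Kgrp H a)"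

lemma KC_eq: "KC = generate (HWrZ H) Kgen"
  using Kgen_sub by (simp add: Kgrp_def carrier_subgroup_generated Int_absorb1)

lemma K_subgroup: "subgroup KC (HWrZ H)"
  unfolding KC_eq by (rule HW.generate_is_subgroup[OF Kgen_sub])

lemma K_eq: "Kgrp H a = (HWrZ H)\<lparr>carrier := KC\<rparr>"
  unfolding Kgrp_def by (rule subgroup_generated_eq)

lemma K_group: "group (Kgrp H a)" unfolding Kgrp_def by simp
sublocale K: group "Kgrp H a" by (rule K_group)

lemma K_one[simp]: "\<one>\<^bsub>Kgrp H a\<^esub> = \<one>\<^bsub>HWrZ H\<^esub>" by (simp add: Kgrp_def)
lemma K_mult[simp]: "x \<otimes>\<^bsub>Kgrp H a\<^esub> y = x \<otimes>\<^bsub>HWrZ H\<^esub> y" by (simp add: Kgrp_def)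
lemma K_inv[simp]: "x \<in> KC \<Longrightarrow> inv\<^bsub>Kgrp H a\<^esub> x = inv\<^bsub>HWrZ H\<^esub> x"
  unfolding Kgrp_def by (rule HW.inv_subgroup_generated) (simp add: Kgrp_def[symmetric])
lemma KC_sub: "KC \<subseteq> carrier (HWrZ H)" using subgroup.subset[OF K_subgroup] .

lemma zelt_K: "zelt H \<in> KC" unfolding KC_eq by (rule generate.incl) simp
lemma belt_K: "i \<ge> 1 \<Longrightarrow> belt H a i \<in> KC" unfolding KC_eq by (rule generate.incl) simp
lemma one_K: "\<one>\<^bsub>HWrZ H\<^esub> \<in> KC" using K.one_closed by simp

abbreviation "cf \<equiv> cfun H a"

lemma pow2_the: "i > 0 \<Longrightarrow> (THE j. j > 0 \<and> (2::int) ^ i = 2 ^ j) = i"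
  by (rule the_equality) (auto dest: power_inject_exp[THEN iffD1, rotated])

lemma cf_1: "cf 1 = zelt H" by (simp add: cfun_def)
lemma cf_pow: "i > 0 \<Longrightarrow> cf (2 ^ i) = belt H a i"
proof -
  assume i: "i > 0"
  have "(2::int) ^ i \<noteq> 1" using i one_less_power[of "2::int" i] by linarith
  thus ?thesis using i pow2_the[OF i] by (auto simp: cfun_def)
qed
lemma cf_0: "cf 0 = \<one>\<^bsub>HWrZ H\<^esub>" by (auto simp: cfun_def)

lemma cf_K[simp]: "cf t \<in> KC"
proof (cases "\<exists>i::nat. i > 0 \<and> t = 2 ^ i")
  case True
  then obtain i where "i > 0" "t = 2 ^ i" by auto
  thus ?thesis using cf_pow belt_K by simp
next
  case False
  thus ?thesis using zelt_K one_K by (auto simp: cfun_def) (metis less_numeral_extra(3))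
qed

sublocale W: group "KWrS H a" by (rule WZ_group[OF K_group])

lemma celt_in: "celt H a \<in> carrier (KWrS H a)" by (simp add: celt_def WZ_mem)
lemma selt_eq: "selt H a = (\<lambda>k. \<one>\<^bsub>HWrZ H\<^esub>, 1)" by (simp add: selt_def restrict_UNIV)
lemma selt_in: "selt H a \<in> carrier (KWrS H a)" by (simp add: selt_eq WZ_mem one_K)

abbreviation "GC \<equiv> carrier (Ggrp H a)"
lemma GC_eq: "GC = generate (KWrS H a) {celt H a, selt H a}"
  using celt_in selt_in by (simp add: Ggrp_def carrier_subgroup_generated Int_absorb1)
lemma G_subgroup: "subgroup GC (KWrS H a)"
  unfolding GC_eq by (rule W.generate_is_subgroup) (simp add: celt_in selt_in)
lemma G_eq: "Ggrp H a = (KWrS H a)\<lparr>carrier := GC\<rparr>"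
  unfolding Ggrp_def by (rule subgroup_generated_eq)
lemma G_group: "group (Ggrp H a)" unfolding Ggrp_def by simp

end



lemma Base_one: "Base A {\<one>\<^bsub>A\<^esub>} \<subseteq> {\<one>\<^bsub>WZ A\<^esub>}"
  by (auto simp: Base_def WZ_one)

context cstr begin

lemma K_derived: "(derived (Kgrp H a) ^^ n) KC = (derived (HWrZ H) ^^ n) KC"
proof -
  have "(derived ((HWrZ H)\<lparr>carrier := KC\<rparr>) ^^ n) KC = (derived (HWrZ H) ^^ n) KC"
    by (rule derived_pow_consistent[OF HW_group K_subgroup])
  thus ?thesis by (simp only: K_eq[symmetric])
qed

lemma G_derived: "(derived (Ggrp H a) ^^ n) GC = (derived (KWrS H a) ^^ n) GC"
proof -
  have "(derived ((KWrS H a)\<lparr>carrier := GC\<rparr>) ^^ n) GC = (derived (KWrS H a) ^^ n) GC"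
    by (rule derived_pow_consistent[OF WZ_group[OF K_group] G_subgroup])
  thus ?thesis by (simp only: G_eq[symmetric])
qed

lemma GC_sub: "GC \<subseteq> carrier (KWrS H a)" using subgroup.subset[OF G_subgroup] .

lemma K_upper: "(derived (Kgrp H a) ^^ Suc n) KC \<subseteq> Base H ((derived H ^^ n) (carrier H))"
  unfolding K_derived by (rule derived_WZ_pow[OF grpH KC_sub])

lemma G_upper: "(derived (KWrS H a) ^^ Suc (Suc n)) GC \<subseteq> Base (Kgrp H a) ((derived (Kgrp H a) ^^ Suc n) KC)"
  by (rule derived_WZ_pow[OF K_group GC_sub])

lemma upper:
  assumes "(derived H ^^ l) (carrier H) = {\<one>\<^bsub>H\<^esub>}"
  shows "(derived (KWrS H a) ^^ Suc (Suc l)) GC = {\<one>\<^bsub>KWrS H a\<^esub>}"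
proof
  have "(derived (Kgrp H a) ^^ Suc l) KC \<subseteq> {\<one>\<^bsub>Kgrp H a\<^esub>}"
    using K_upper[of l] Base_one[of H] assms by (simp add: WZ_one)
  hence "Base (Kgrp H a) ((derived (Kgrp H a) ^^ Suc l) KC) \<subseteq> Base (Kgrp H a) {\<one>\<^bsub>Kgrp H a\<^esub>}"
    by (auto simp: Base_def)
  thus "(derived (KWrS H a) ^^ Suc (Suc l)) GC \<subseteq> {\<one>\<^bsub>KWrS H a\<^esub>}"
    using G_upper[of l] Base_one[of "Kgrp H a"] by blast
  show "{\<one>\<^bsub>KWrS H a\<^esub>} \<subseteq> (derived (KWrS H a) ^^ Suc (Suc l)) GC"
    using subgroup.one_closed[OF W.exp_of_derived_is_subgroup[OF G_subgroup]] by blast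
qed

lemma cf_HW[simp]: "cf t \<in> carrier (HWrZ H)" using cf_K KC_sub by blast
lemma one_W: "\<one>\<^bsub>KWrS H a\<^esub> = (\<lambda>t. \<one>\<^bsub>HWrZ H\<^esub>, 0)" by (simp add: WZ_one)

lemma shift_in: "(\<lambda>t. \<one>\<^bsub>HWrZ H\<^esub>, int n) \<in> GC"
proof (induction n)
  case 0 show ?case using subgroup.one_closed[OF G_subgroup] by (simp add: one_W)
next
  case (Suc n)
  have "selt H a \<in> GC" unfolding GC_eq by (rule generate.incl) simp
  hence "(\<lambda>t. \<one>\<^bsub>HWrZ H\<^esub>, int n) \<otimes>\<^bsub>KWrS H a\<^esub> selt H a \<in> GC"
    using Suc subgroup.m_closed[OF G_subgroup] by blast
  thus ?case by (simp add: selt_eq WZ_mult'[where A="Kgrp H a"] add.commute)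
qed

lemma celt_G: "celt H a \<in> GC" unfolding GC_eq by (rule generate.incl) simp
lemma selt_G: "selt H a \<in> GC" unfolding GC_eq by (rule generate.incl) simp

lemma cshift_in: assumes "k \<ge> 0" shows "(\<lambda>t. cf (t + k), 0) \<in> GC"
proof -
  obtain n where k: "k = int n" using assms nonneg_eq_int by blast
  let ?e = "(\<lambda>t. \<one>\<^bsub>HWrZ H\<^esub>, int n)"
  have e: "?e \<in> GC" by (rule shift_in)
  have "?e \<otimes>\<^bsub>KWrS H a\<^esub> celt H a \<otimes>\<^bsub>KWrS H a\<^esub> inv\<^bsub>KWrS H a\<^esub> ?e \<in> GC"
    using e celt_G subgroup.m_closed[OF G_subgroup] subgroup.m_inv_closed[OF G_subgroup] by blast
  moreover have "?e \<in> carrier (KWrS H a)" using e GC_sub by blast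
  ultimately show ?thesis
    by (simp add: WZ_mult'[where A="Kgrp H a"] WZ_inv[OF K_group] celt_def one_K k)
qed

end



context cstr begin

abbreviation "WW \<equiv> KWrS H a"
abbreviation comm (infix "\<bowtie>" 70) where "u \<bowtie> v \<equiv> u \<otimes>\<^bsub>WW\<^esub> v \<otimes>\<^bsub>WW\<^esub> inv\<^bsub>WW\<^esub> u \<otimes>\<^bsub>WW\<^esub> inv\<^bsub>WW\<^esub> v"

lemma comm_in: "u \<in> S \<Longrightarrow> v \<in> S \<Longrightarrow> u \<bowtie> v \<in> derived WW S"
  unfolding derived_def by (rule generate.incl) blast

lemma W_mem: "p \<in> carrier WW \<longleftrightarrow> (\<forall>t. fst p t \<in> KC)" by (simp add: WZ_mem)

lemma comm_base:
  assumes "u \<in> carrier WW" "v \<in> carrier WW" "snd u = 0" "snd v = 0"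
  shows "u \<bowtie> v = (\<lambda>t. fst u t \<otimes>\<^bsub>HWrZ H\<^esub> fst v t \<otimes>\<^bsub>HWrZ H\<^esub> inv\<^bsub>HWrZ H\<^esub> fst u t \<otimes>\<^bsub>HWrZ H\<^esub> inv\<^bsub>HWrZ H\<^esub> fst v t, 0)"
proof -
  have m: "\<And>t. fst u t \<in> KC" "\<And>t. fst v t \<in> KC" using assms(1,2) W_mem by auto
  show ?thesis using assms m
    by (simp add: WZ_mult'[where A="Kgrp H a"] WZ_inv[OF K_group])
qed

lemma cpos_in: "(\<lambda>t. cf (t + k), 0) \<in> carrier WW" by (simp add: W_mem)

lemma xfst: assumes "i \<ge> 1"
  shows "fst (celt H a \<bowtie> (\<lambda>t. cf (t + (2 ^ i - 1)), 0)) 1 =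
    zelt H \<otimes>\<^bsub>HWrZ H\<^esub> belt H a i \<otimes>\<^bsub>HWrZ H\<^esub> inv\<^bsub>HWrZ H\<^esub> zelt H \<otimes>\<^bsub>HWrZ H\<^esub> inv\<^bsub>HWrZ H\<^esub> belt H a i"
    "snd (celt H a \<bowtie> (\<lambda>t. cf (t + (2 ^ i - 1)), 0)) = 0"
  using comm_base[OF celt_in cpos_in] cf_1 cf_pow[of i] assms by (simp_all add: celt_def)

lemma yval: "selt H a \<bowtie> celt H a = (\<lambda>t. cf (t + 1) \<otimes>\<^bsub>HWrZ H\<^esub> inv\<^bsub>HWrZ H\<^esub> cf t, 0)"
  using celt_in selt_in
  by (simp add: WZ_mult'[where A="Kgrp H a"] WZ_inv[OF K_group] selt_eq celt_def one_K)

lemma Xval: assumes "i \<ge> 1"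
  shows "zelt H \<otimes>\<^bsub>HWrZ H\<^esub> belt H a i \<otimes>\<^bsub>HWrZ H\<^esub> inv\<^bsub>HWrZ H\<^esub> zelt H \<otimes>\<^bsub>HWrZ H\<^esub> inv\<^bsub>HWrZ H\<^esub> belt H a i
    = (\<lambda>u. if u = 0 then a i else \<one>\<^bsub>H\<^esub>, 0)"
  using zelt_in belt_in[OF assms] a_in[OF assms]
  by (auto simp: WZ_mult'[where A=H] WZ_inv[OF grpH] zelt_eq belt_eq)

lemma Yval: "belt H a 1 \<otimes>\<^bsub>HWrZ H\<^esub> inv\<^bsub>HWrZ H\<^esub> zelt H = (\<lambda>u. if u > 0 then a 1 else \<one>\<^bsub>H\<^esub>, -1)"
  using zelt_in belt_in[of 1] a_in[of 1]
  by (auto simp: WZ_mult'[where A=H] WZ_inv[OF grpH] zelt_eq belt_eq)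

end



context cstr begin

lemma final_val: assumes "i \<ge> 1"
  shows "fst ((\<lambda>u. if u = 0 then a i else \<one>\<^bsub>H\<^esub>, 0) \<otimes>\<^bsub>HWrZ H\<^esub> (\<lambda>u. if u > 0 then a 1 else \<one>\<^bsub>H\<^esub>, -1)
     \<otimes>\<^bsub>HWrZ H\<^esub> inv\<^bsub>HWrZ H\<^esub> (\<lambda>u. if u = 0 then a i else \<one>\<^bsub>H\<^esub>, 0)
     \<otimes>\<^bsub>HWrZ H\<^esub> inv\<^bsub>HWrZ H\<^esub> (\<lambda>u. if u > 0 then a 1 else \<one>\<^bsub>H\<^esub>, -1)) 0 = a i"
  using a_in[OF assms] a_in[of 1]
  by (simp add: WZ_mult'[where A=H] WZ_inv[OF grpH] WZ_mem)

end


context cstr begin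
definition "yel = selt H a \<bowtie> celt H a"
definition "xel i = celt H a \<bowtie> (\<lambda>t. cf (t + (2 ^ i - 1)), 0)"
definition psi :: "((int \<Rightarrow> (int \<Rightarrow> 'h) \<times> int) \<times> int) \<Rightarrow> 'h" where "psi p = fst (fst p 1) 0"

lemma yel_D1: "yel \<in> derived WW GC" unfolding yel_def by (rule comm_in[OF selt_G celt_G])
lemma xel_D1: "xel i \<in> derived WW GC"
  unfolding xel_def by (rule comm_in[OF celt_G cshift_in]) simp

lemma D1_sub: "derived WW GC \<subseteq> carrier WW" by (rule W.derived_in_carrier[OF GC_sub])

lemma yel_fst1: "fst yel 1 = belt H a 1 \<otimes>\<^bsub>HWrZ H\<^esub> inv\<^bsub>HWrZ H\<^esub> zelt H"
  using cf_pow[of 1] cf_1 by (simp add: yel_def yval)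
lemma yel_fst0: "fst yel 0 = zelt H"
  using cf_0 cf_1 zelt_in by (simp add: yel_def yval)
lemma yel_snd: "snd yel = 0" by (simp add: yel_def yval)

lemma w_D2: "xel i \<bowtie> yel \<in> (derived WW ^^ Suc (Suc 0)) GC"
  using comm_in[OF xel_D1 yel_D1] by simp

lemma psi_w: assumes "i \<ge> 1" shows "psi (xel i \<bowtie> yel) = a i"
proof -
  have c: "xel i \<in> carrier WW" "yel \<in> carrier WW" using xel_D1 yel_D1 D1_sub by auto
  have "fst (xel i \<bowtie> yel) 1 = fst (xel i) 1 \<otimes>\<^bsub>HWrZ H\<^esub> fst yel 1 \<otimes>\<^bsub>HWrZ H\<^esub> inv\<^bsub>HWrZ H\<^esub> fst (xel i) 1 \<otimes>\<^bsub>HWrZ H\<^esub> inv\<^bsub>HWrZ H\<^esub> fst yel 1"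
    using comm_base[OF c] xfst(2)[OF assms] yel_snd by (simp add: xel_def)
  thus ?thesis
    using xfst(1)[OF assms] yel_fst1 Xval[OF assms] Yval final_val[OF assms]
    by (simp add: psi_def xel_def)
qed

lemma yel_ne: "yel \<noteq> \<one>\<^bsub>WW\<^esub>"
proof
  assume "yel = \<one>\<^bsub>WW\<^esub>"
  hence "fst yel 0 = \<one>\<^bsub>HWrZ H\<^esub>" by (simp add: one_W)
  thus False using yel_fst0 by (simp add: zelt_eq WZ_one)
qed

end


context cstr begin
definition "B2 = {p \<in> carrier WW. snd p = 0 \<and> (\<forall>t. snd (fst p t) = 0)}"

lemma B2_mult: assumes "p \<in> B2" "q \<in> B2"
  shows "p \<otimes>\<^bsub>WW\<^esub> q \<in> B2 \<and> psi (p \<otimes>\<^bsub>WW\<^esub> q) = psi p \<otimes>\<^bsub>H\<^esub> psi q"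
proof -
  have c: "p \<otimes>\<^bsub>WW\<^esub> q \<in> carrier WW" using assms by (simp add: B2_def)
  have e: "p \<otimes>\<^bsub>WW\<^esub> q = (\<lambda>x. (\<lambda>y. fst (fst p x) y \<otimes>\<^bsub>H\<^esub> fst (fst q x) y, 0), 0)"
    using assms by (simp add: B2_def WZ_mult'[where A="Kgrp H a"] WZ_mult'[where A=H])
  show ?thesis using c assms unfolding e by (simp add: B2_def psi_def)
qed

lemma B2_inv: assumes p: "p \<in> B2" shows "inv\<^bsub>WW\<^esub> p \<in> B2 \<and> psi (inv\<^bsub>WW\<^esub> p) = inv\<^bsub>H\<^esub> psi p"
proof -
  have k: "\<And>t. fst p t \<in> KC" "\<And>t. fst p t \<in> carrier (HWrZ H)" using p KC_sub by (auto simp: B2_def W_mem)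
  have c: "inv\<^bsub>WW\<^esub> p \<in> carrier WW" using p by (simp add: B2_def)
  have e: "inv\<^bsub>WW\<^esub> p = (\<lambda>t. (\<lambda>y. inv\<^bsub>H\<^esub> fst (fst p t) y, 0), 0)"
    using p k by (simp add: B2_def WZ_inv[OF K_group] WZ_inv[OF grpH])
  show ?thesis using c p unfolding e by (simp add: B2_def psi_def)
qed

lemma B2_carrier: assumes "p \<in> B2" shows "psi p \<in> carrier H"
proof -
  have "fst p 1 \<in> carrier (HWrZ H)" using assms KC_sub by (auto simp: B2_def W_mem)
  thus ?thesis by (simp add: psi_def WZ_mem)
qed

lemma psi_one: "psi \<one>\<^bsub>WW\<^esub> = \<one>\<^bsub>H\<^esub>" by (simp add: psi_def one_W WZ_one)

end


context cstr begin
lemma psi_subgroup: assumes "subgroup D WW" "D \<subseteq> B2" shows "subgroup (psi ` D) H"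
proof (rule H.subgroupI)
  show "psi ` D \<subseteq> carrier H" using assms(2) B2_carrier by auto
  show "psi ` D \<noteq> {}" using subgroup.one_closed[OF assms(1)] by auto
next
  fix h assume "h \<in> psi ` D"
  then obtain p where p: "p \<in> D" "h = psi p" by auto
  have "inv\<^bsub>WW\<^esub> p \<in> D" using p subgroup.m_inv_closed[OF assms(1)] by blast
  moreover have "psi (inv\<^bsub>WW\<^esub> p) = inv\<^bsub>H\<^esub> h" using B2_inv[of p] p assms(2) by blast
  ultimately show "inv\<^bsub>H\<^esub> h \<in> psi ` D" by (metis image_eqI)
next
  fix h g assume "h \<in> psi ` D" "g \<in> psi ` D"
  then obtain p q where p: "p \<in> D" "h = psi p" "q \<in> D" "g = psi q" by auto
  have "p \<otimes>\<^bsub>WW\<^esub> q \<in> D" using p subgroup.m_closed[OF assms(1)] by blast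
  moreover have "psi (p \<otimes>\<^bsub>WW\<^esub> q) = h \<otimes>\<^bsub>H\<^esub> g" using B2_mult[of p q] p assms(2) by blast
  ultimately show "h \<otimes>\<^bsub>H\<^esub> g \<in> psi ` D" by (metis image_eqI)
qed

lemma Dn_B2: "(derived WW ^^ Suc (Suc n)) GC \<subseteq> B2"
proof
  fix p assume p: "p \<in> (derived WW ^^ Suc (Suc n)) GC"
  have "p \<in> carrier WW" using p W.exp_of_derived_in_carrier[OF GC_sub] by blast
  moreover have "p \<in> Base (Kgrp H a) ((derived (Kgrp H a) ^^ Suc n) KC)" using p G_upper by blast
  moreover have "(derived (Kgrp H a) ^^ Suc n) KC \<subseteq> Base H ((derived H ^^ n) (carrier H))" by (rule K_upper)
  ultimately have "snd p = 0" "\<forall>t. fst p t \<in> Base H ((derived H ^^ n) (carrier H))"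
    unfolding Base_def by blast+
  thus "p \<in> B2" using \<open>p \<in> carrier WW\<close> unfolding B2_def Base_def by blast
qed

lemma Dn_subgroup: "subgroup ((derived WW ^^ n) GC) WW"
  by (rule W.exp_of_derived_is_subgroup[OF G_subgroup])

end


context cstr begin
lemma lower: assumes "generate H (a ` {1..}) = carrier H"
  shows "(derived H ^^ n) (carrier H) \<subseteq> psi ` ((derived WW ^^ Suc (Suc n)) GC)"
proof (induction n)
  case 0
  have "a ` {1..} \<subseteq> psi ` ((derived WW ^^ Suc (Suc 0)) GC)"
  proof
    fix h assume "h \<in> a ` {1..}"
    then obtain i where "i \<ge> 1" "h = a i" by auto
    hence "psi (xel i \<bowtie> yel) = h" using psi_w by simp
    thus "h \<in> psi ` ((derived WW ^^ Suc (Suc 0)) GC)" using w_D2[of i] by blast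
  qed
  hence "generate H (a ` {1..}) \<subseteq> psi ` ((derived WW ^^ Suc (Suc 0)) GC)"
    by (rule H.generate_subgroup_incl[OF _ psi_subgroup[OF Dn_subgroup Dn_B2]])
  thus ?case using assms by simp
next
  case (Suc n)
  let ?D = "(derived WW ^^ Suc (Suc n)) GC"
  have "derived_set H ((derived H ^^ n) (carrier H)) \<subseteq> psi ` ((derived WW ^^ Suc (Suc (Suc n))) GC)"
  proof clarify
    fix h1 h2 assume h: "h1 \<in> (derived H ^^ n) (carrier H)" "h2 \<in> (derived H ^^ n) (carrier H)"
    then obtain p1 p2 where p: "p1 \<in> ?D" "p2 \<in> ?D" "h1 = psi p1" "h2 = psi p2" using Suc by blast
    have b: "p1 \<in> B2" "p2 \<in> B2" using p Dn_B2 by auto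
    have "p1 \<bowtie> p2 \<in> (derived WW ^^ Suc (Suc (Suc n))) GC" using comm_in[OF p(1,2)] by simp
    moreover have "psi (p1 \<bowtie> p2) = h1 \<otimes>\<^bsub>H\<^esub> h2 \<otimes>\<^bsub>H\<^esub> inv\<^bsub>H\<^esub> h1 \<otimes>\<^bsub>H\<^esub> inv\<^bsub>H\<^esub> h2"
    proof -
      have i1: "inv\<^bsub>WW\<^esub> p1 \<in> B2" "psi (inv\<^bsub>WW\<^esub> p1) = inv\<^bsub>H\<^esub> h1" using B2_inv[OF b(1)] p(3) by auto
      have i2: "inv\<^bsub>WW\<^esub> p2 \<in> B2" "psi (inv\<^bsub>WW\<^esub> p2) = inv\<^bsub>H\<^esub> h2" using B2_inv[OF b(2)] p(4) by auto
      have m1: "p1 \<otimes>\<^bsub>WW\<^esub> p2 \<in> B2" "psi (p1 \<otimes>\<^bsub>WW\<^esub> p2) = h1 \<otimes>\<^bsub>H\<^esub> h2" using B2_mult[OF b] p(3,4) by auto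
      have m2: "p1 \<otimes>\<^bsub>WW\<^esub> p2 \<otimes>\<^bsub>WW\<^esub> inv\<^bsub>WW\<^esub> p1 \<in> B2" "psi (p1 \<otimes>\<^bsub>WW\<^esub> p2 \<otimes>\<^bsub>WW\<^esub> inv\<^bsub>WW\<^esub> p1) = h1 \<otimes>\<^bsub>H\<^esub> h2 \<otimes>\<^bsub>H\<^esub> inv\<^bsub>H\<^esub> h1"
        using B2_mult[OF m1(1) i1(1)] m1(2) i1(2) by auto
      show ?thesis using B2_mult[OF m2(1) i2(1)] m2(2) i2(2) by auto
    qed
    ultimately show "h1 \<otimes>\<^bsub>H\<^esub> h2 \<otimes>\<^bsub>H\<^esub> inv\<^bsub>H\<^esub> h1 \<otimes>\<^bsub>H\<^esub> inv\<^bsub>H\<^esub> h2 \<in> psi ` ((derived WW ^^ Suc (Suc (Suc n))) GC)"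
      by (metis image_eqI)
  qed
  hence "derived H ((derived H ^^ n) (carrier H)) \<subseteq> psi ` ((derived WW ^^ Suc (Suc (Suc n))) GC)"
    unfolding derived_def[of H "(derived H ^^ n) (carrier H)"] by (rule H.generate_subgroup_incl[OF _ psi_subgroup[OF Dn_subgroup Dn_B2]])
  thus ?case by simp
qed

end



context cstr begin

lemma main:
  assumes gen: "generate H (a ` {1..}) = carrier H" and sl: "solvable_length H l"
  shows "group (Ggrp H a) \<and> solvable_length (Ggrp H a) (l + 2)"
proof -
  have oneG: "\<one>\<^bsub>Ggrp H a\<^esub> = \<one>\<^bsub>WW\<^esub>" by (simp add: Ggrp_def)
  have Hl: "(derived H ^^ l) (carrier H) = {\<one>\<^bsub>H\<^esub>}" using sl by (simp add: solvable_length_def)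
  have nz: "\<exists>p \<in> (derived WW ^^ Suc l) GC. p \<noteq> \<one>\<^bsub>WW\<^esub>"
  proof (cases l)
    case 0 thus ?thesis using yel_D1 yel_ne by auto
  next
    case (Suc k)
    have "(derived H ^^ k) (carrier H) \<noteq> {\<one>\<^bsub>H\<^esub>}" using sl Suc by (simp add: solvable_length_def)
    moreover have "\<one>\<^bsub>H\<^esub> \<in> (derived H ^^ k) (carrier H)"
      using subgroup.one_closed[OF H.exp_of_derived_is_subgroup[OF H.subgroup_self]] by blast
    ultimately obtain h where h: "h \<in> (derived H ^^ k) (carrier H)" "h \<noteq> \<one>\<^bsub>H\<^esub>" by blast
    then obtain p where p: "p \<in> (derived WW ^^ Suc (Suc k)) GC" "psi p = h" using lower[OF gen, of k] by blast
    hence "p \<noteq> \<one>\<^bsub>WW\<^esub>" using h(2) psi_one by auto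
    thus ?thesis using p Suc by auto
  qed
  have "\<forall>m<l + 2. (derived WW ^^ m) GC \<noteq> {\<one>\<^bsub>WW\<^esub>}"
  proof (intro allI impI)
    fix m assume m: "m < l + 2"
    have "(derived WW ^^ (m + (Suc l - m))) GC \<subseteq> (derived WW ^^ m) GC"
      by (rule derived_pow_anti[OF WZ_group[OF K_group] G_subgroup])
    moreover have "m + (Suc l - m) = Suc l" using m by simp
    ultimately show "(derived WW ^^ m) GC \<noteq> {\<one>\<^bsub>WW\<^esub>}" using nz by auto
  qed
  moreover have "(derived WW ^^ (l + 2)) GC = {\<one>\<^bsub>WW\<^esub>}" using upper[OF Hl] by simp
  ultimately show ?thesis using G_group
    unfolding solvable_length_def G_derived oneG by blast
qed

end

theorem corollary2:
  fixes H :: "('h, 'm) monoid_scheme" and a :: "nat \<Rightarrow> 'h" and l :: nat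
  assumes "group H"
    and "\<And>i. i \<ge> 1 \<Longrightarrow> a i \<in> carrier H"
    and "generate H (a ` {1..}) = carrier H"
    and "solvable_length H l"
  shows "group (Ggrp H a) \<and> solvable_length (Ggrp H a) (l + 2)"
proof -
  interpret cstr H a by (rule cstr.intro[OF assms(1) assms(2)])
  show ?thesis by (rule main[OF assms(3,4)])
qed



end
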